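(* Let $H=\ell^2(\mathbb{N})$ with its standard orthonormal basis, $K(H)$ the compact operators on $H$ represented by infinite matrices, and let $A=(a_{ij})\in\ell^\infty(\mathbb{N}^2)$ be such that $S_A(T)=A\circ T$ is a nonzero $*$-preserving map $S_A\colon K(H)\to K(H)$ (i.e. $S_A(T^* )=S_A(T)^*$). If $S_A$ is multiplicative, then $|a_{ij}|=1$ and $a_{ii}=1$ for all $i,j$.
   Context: $A\circ T$ is the entrywise product of $A$ with the matrix of $T$; $\ell^\infty(\mathbb{N}^2)$ denotes infinite matrices with uniformly bounded entries; multiplicative means $S_A(BC)=S_A(B)S_A(C)$ for all $B,C\in K(H)$. *)

theory Defs
  imports "HOL-Analysis.Analysis"
begin

definition l2 :: "(nat \<Rightarrow> complex) set" where
  "l2 = {x. summable (\<lambda>n. (cmod (x n))^2)}"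

definition l2norm :: "(nat \<Rightarrow> complex) \<Rightarrow> real" where
  "l2norm x = sqrt (\<Sum>n. (cmod (x n))^2)"

text \<open>Operators are represented by infinite matrices M i j = <M e_j, e_i>.\<close>

definition mat_apply :: "(nat \<Rightarrow> nat \<Rightarrow> complex) \<Rightarrow> (nat \<Rightarrow> complex) \<Rightarrow> (nat \<Rightarrow> complex)" where
  "mat_apply M x = (\<lambda>i. \<Sum>j. M i j * x j)"

definition bounded_matrix :: "(nat \<Rightarrow> nat \<Rightarrow> complex) \<Rightarrow> bool" where
  "bounded_matrix M \<longleftrightarrow>
     (\<forall>x\<in>l2. \<forall>i. summable (\<lambda>j. M i j * x j)) \<and>
     (\<exists>C. \<forall>x\<in>l2. mat_apply M x \<in> l2 \<and> l2norm (mat_apply M x) \<le> C * l2norm x)"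

text \<open>M is the matrix of a compact operator: bounded, and the image of the closed unit ball
  is relatively compact, i.e. (H being complete) totally bounded.\<close>
definition compact_matrix :: "(nat \<Rightarrow> nat \<Rightarrow> complex) \<Rightarrow> bool" where
  "compact_matrix M \<longleftrightarrow> bounded_matrix M \<and>
     (\<forall>e>0. \<exists>F. finite F \<and> F \<subseteq> l2 \<and>
        (\<forall>x\<in>l2. l2norm x \<le> 1 \<longrightarrow> (\<exists>y\<in>F. l2norm (\<lambda>i. mat_apply M x i - y i) \<le> e)))"

definition schur :: "(nat \<Rightarrow> nat \<Rightarrow> complex) \<Rightarrow> (nat \<Rightarrow> nat \<Rightarrow> complex) \<Rightarrow> (nat \<Rightarrow> nat \<Rightarrow> complex)" where
  "schur A T = (\<lambda>i j. A i j * T i j)"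

definition adj :: "(nat \<Rightarrow> nat \<Rightarrow> complex) \<Rightarrow> (nat \<Rightarrow> nat \<Rightarrow> complex)" where
  "adj T = (\<lambda>i j. cnj (T j i))"

definition mat_mult :: "(nat \<Rightarrow> nat \<Rightarrow> complex) \<Rightarrow> (nat \<Rightarrow> nat \<Rightarrow> complex) \<Rightarrow> (nat \<Rightarrow> nat \<Rightarrow> complex)" where
  "mat_mult B C = (\<lambda>i j. \<Sum>k. B i k * C k j)"

definition linf_entries :: "(nat \<Rightarrow> nat \<Rightarrow> complex) \<Rightarrow> bool" where
  "linf_entries A \<longleftrightarrow> (\<exists>C. \<forall>i j. cmod (A i j) \<le> C)"

end

theory Submission
  imports Defs
begin

definition unitm :: "nat \<Rightarrow> nat \<Rightarrow> nat \<Rightarrow> nat \<Rightarrow> complex" where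
  "unitm i j = (\<lambda>a b. if a = i \<and> b = j then 1 else 0)"

definition svec :: "nat \<Rightarrow> complex \<Rightarrow> nat \<Rightarrow> complex" where
  "svec i c = (\<lambda>a. if a = i then c else 0)"

lemma svec_sq: "(\<lambda>n. (cmod (svec i c n))^2) = (\<lambda>n. if n = i then (cmod c)^2 else 0)"
  by (auto simp: svec_def)

lemma svec_l2: "svec i c \<in> l2"
  unfolding l2_def using sums_single[of i "\<lambda>_. (cmod c)^2"] svec_sq
  by (auto simp: sums_iff)

lemma svec_norm: "l2norm (svec i c) = cmod c"
proof -
  have "(\<Sum>n. (cmod (svec i c n))^2) = (cmod c)^2"
    using sums_single[of i "\<lambda>_. (cmod c)^2"] svec_sq by (simp add: sums_iff)
  then show ?thesis by (simp add: l2norm_def)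
qed

lemma coord_le: assumes "x \<in> l2" shows "cmod (x j) \<le> l2norm x"
proof -
  have s: "summable (\<lambda>n. (cmod (x n))^2)" using assms by (simp add: l2_def)
  have "sum (\<lambda>n. (cmod (x n))^2) {j} \<le> (\<Sum>n. (cmod (x n))^2)"
    by (rule sum_le_suminf[OF s]) auto
  then have "(cmod (x j))^2 \<le> (\<Sum>n. (cmod (x n))^2)" by simp
  then show ?thesis unfolding l2norm_def by (simp add: real_le_rsqrt)
qed

lemma unit_summand: "(\<lambda>b. unitm i j a b * x b) = (\<lambda>b. if b = j then (if a = i then x j else 0) else 0)"
  by (auto simp: unitm_def)

lemma unit_apply: "mat_apply (unitm i j) x = svec i (x j)"
proof
  fix a
  show "mat_apply (unitm i j) x a = svec i (x j) a"
    unfolding mat_apply_def unit_summand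
    using sums_single[of j "\<lambda>_. (if a = i then x j else 0)"]
    by (simp add: sums_iff svec_def)
qed

lemma unit_compact: "compact_matrix (unitm i j)"
proof -
  have b: "bounded_matrix (unitm i j)"
    unfolding bounded_matrix_def
  proof (intro conjI)
    show "\<forall>x\<in>l2. \<forall>a. summable (\<lambda>b. unitm i j a b * x b)"
    proof (intro ballI allI)
    fix x :: "nat \<Rightarrow> complex" and a
    show "summable (\<lambda>b. unitm i j a b * x b)"
      unfolding unit_summand using sums_single[of j "\<lambda>_. (if a = i then x j else 0)"]
      by (simp add: sums_iff)
    qed
    show "\<exists>C. \<forall>x\<in>l2. mat_apply (unitm i j) x \<in> l2 \<and> l2norm (mat_apply (unitm i j) x) \<le> C * l2norm x"
    proof (intro exI[of _ 1] ballI)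
    fix x assume "x \<in> l2"
    then show "mat_apply (unitm i j) x \<in> l2 \<and> l2norm (mat_apply (unitm i j) x) \<le> 1 * l2norm x"
      by (simp add: unit_apply svec_l2 svec_norm coord_le)
    qed
  qed
  have tb: "\<exists>F. finite F \<and> F \<subseteq> l2 \<and>
        (\<forall>x\<in>l2. l2norm x \<le> 1 \<longrightarrow> (\<exists>y\<in>F. l2norm (\<lambda>i'. mat_apply (unitm i j) x i' - y i') \<le> e))"
    if e: "e > 0" for e
  proof -
    have cov: "cball (0::complex) 1 \<subseteq> (\<Union>c\<in>cball 0 1. ball c e)" using e by auto
    obtain K where K: "K \<subseteq> cball 0 1" "finite K" "cball (0::complex) 1 \<subseteq> (\<Union>c\<in>K. ball c e)"
      apply (rule compactE_image[OF compact_cball, where C="cball (0::complex) 1" and f="\<lambda>c. ball c e"])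
      using cov by auto
    show ?thesis
    proof (intro exI[of _ "svec i ` K"] conjI ballI impI)
      show "finite (svec i ` K)" using K by simp
      show "svec i ` K \<subseteq> l2" using svec_l2 by auto
    next
      fix x assume x: "x \<in> l2" "l2norm x \<le> 1"
      then have "x j \<in> cball 0 1" using coord_le[OF x(1), of j] by simp
      then obtain c where c: "c \<in> K" "dist c (x j) < e" using K(3) by auto
      have eq: "(\<lambda>i'. mat_apply (unitm i j) x i' - svec i c i') = svec i (x j - c)"
        by (auto simp: unit_apply svec_def)
      have "l2norm (svec i (x j - c)) \<le> e" using c(2)
        by (simp add: svec_norm dist_norm norm_minus_commute)
      then show "\<exists>y\<in>svec i ` K. l2norm (\<lambda>i'. mat_apply (unitm i j) x i' - y i') \<le> e"
        using c(1) eq by (metis image_eqI)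
    qed
  qed
  show ?thesis unfolding compact_matrix_def using b tb by blast
qed

lemma schur_unit: "schur A (unitm i j) = (\<lambda>a b. if a = i \<and> b = j then A i j else 0)"
  by (intro ext) (auto simp: schur_def unitm_def)

lemma adj_unit: "adj (unitm i j) = unitm j i"
  by (intro ext) (auto simp: adj_def unitm_def)

lemma mult_unit: "mat_mult (unitm i j) (unitm j k) = unitm i k"
proof (intro ext)
  fix a b
  have "(\<lambda>m. unitm i j a m * unitm j k m b) = (\<lambda>m. if m = j then unitm i k a b else 0)"
    by (auto simp: unitm_def)
  then show "mat_mult (unitm i j) (unitm j k) a b = unitm i k a b"
    unfolding mat_mult_def using sums_single[of j "\<lambda>_. unitm i k a b"]
    by (simp add: sums_iff)
qed

lemma mult_sunit: "mat_mult (schur A (unitm i j)) (schur A (unitm j k)) i k = A i j * A j k"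
proof -
  have "(\<lambda>m. schur A (unitm i j) i m * schur A (unitm j k) m k) = (\<lambda>m. if m = j then A i j * A j k else 0)"
    by (auto simp: schur_unit)
  then show ?thesis
    unfolding mat_mult_def using sums_single[of j "\<lambda>_. A i j * A j k"]
    by (simp add: sums_iff)
qed

theorem corollary4p4:
  fixes A :: "nat \<Rightarrow> nat \<Rightarrow> complex"
  assumes bdd: "linf_entries A"
    and maps: "\<forall>T. compact_matrix T \<longrightarrow> compact_matrix (schur A T)"
    and nonzero: "\<exists>T. compact_matrix T \<and> schur A T \<noteq> (\<lambda>i j. 0)"
    and star: "\<forall>T. compact_matrix T \<longrightarrow> schur A (adj T) = adj (schur A T)"
    and mult: "\<forall>B C. compact_matrix B \<longrightarrow> compact_matrix C \<longrightarrow>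
                 schur A (mat_mult B C) = mat_mult (schur A B) (schur A C)"
  shows "\<forall>i j. cmod (A i j) = 1 \<and> A i i = 1"
proof -
  have M: "A i k = A i j * A j k" for i j k
  proof -
    have "schur A (mat_mult (unitm i j) (unitm j k)) i k
          = mat_mult (schur A (unitm i j)) (schur A (unitm j k)) i k"
      using mult unit_compact by simp
    then show ?thesis unfolding mult_unit mult_sunit by (simp add: schur_unit)
  qed
  have S: "A j i = cnj (A i j)" for i j
  proof -
    have "schur A (adj (unitm i j)) j i = adj (schur A (unitm i j)) j i"
      using star unit_compact by simp
    then show ?thesis unfolding adj_unit by (simp add: schur_unit adj_def)
  qed
  have D: "A i i = of_real ((cmod (A i j))^2)" for i j
  proof -
    have "A i i = A i j * A j i" by (rule M)
    also have "\<dots> = A i j * cnj (A i j)" by (rule arg_cong[where f="\<lambda>z. A i j * z"], rule S)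
    finally have "A i i = A i j * cnj (A i j)" .
    then show ?thesis by (metis complex_norm_square)
  qed
  have D2: "A j j = A i i" for i j
    using D[of i j] D[of j i] S[of i j] by simp
  have nz: "A i i \<noteq> 0" for i
  proof
    assume "A i i = 0"
    then have "A a b = 0" for a b using D[of a b] D2[of i a] by simp
    then have "schur A T = (\<lambda>i j. 0)" for T by (auto simp: schur_def)
    then show False using nonzero by blast
  qed
  have one: "A i i = 1" for i
    using M[of i i i] nz[of i] by (metis mult_cancel_left mult.right_neutral)
  show ?thesis
  proof (intro allI conjI)
    fix i j
    have "(cmod (A i j))^2 = 1" using D[of i j] one[of i] by (metis of_real_eq_1_iff)
    then show "cmod (A i j) = 1" using norm_ge_zero[of "A i j"] by (auto simp add: power2_eq_1_iff)
    show "A i i = 1" by (rule one)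
  qed
qed

end
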